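(* Let $\alpha_i,\beta_i,\gamma_i,\delta_i\in(0,\pi)$, $i=1,\dots,4$. Replace, for all $i=1,\dots,4$, the numbers $\alpha_i,\beta_i,\gamma_i,\delta_i$ by $\pi-\alpha_i,\pi-\beta_i,\pi-\gamma_i,\pi-\delta_i$. This replacement preserves the values $M_i,r_i,s_i,f_i$ (whenever defined), and preserves each of the following conditions: (E) $\alpha_i\pm\beta_i\pm\gamma_i\pm\delta_i\not\equiv0\pmod{2\pi}$ for all sign choices; (C1) $M_1=M_2=M_3=M_4$; (C2) $r_1=r_2$, $s_1=s_4$, $r_3=r_4$, $s_2=s_3$; (C3) $t_1+e_1t_2+e_2t_3+e_3t_4\in\Lambda$ for some $e_1,e_2,e_3\in\{\pm1\}$.
   Context: $\sigma_i=(\alpha_i+\beta_i+\gamma_i+\delta_i)/2$, $\overline{\alpha}_i=\sigma_i-\alpha_i$, etc.; $a_i=\sin\alpha_i/\sin\overline{\alpha}_i$, $b_i=\sin\beta_i/\sin\overline{\beta}_i$, $c_i=\sin\gamma_i/\sin\overline{\gamma}_i$, $d_i=\sin\delta_i/\sin\overline{\delta}_i$, $M_i=a_ib_ic_id_i$, $r_i=a_id_i$, $s_i=c_id_i$, $f_i=a_ic_i$. When $M:=M_1=\dots=M_4$: $k=\sqrt{1-M}$ if $M<1$, $k=\sqrt{1-M^{-1}}$ if $M>1$; $k'=\sqrt{1-k^2}$; $K=\int_0^1\frac{dx}{\sqrt{(1-x^2)(1-k^2x^2)}}$, $K'=\int_0^1\frac{dx}{\sqrt{(1-x^2)(1-k'^2x^2)}}$;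 $\Lambda=\{4Km+2\mathbf{i}K'n\}_{m,n\in\mathbb{Z}}$ if $M<1$, $\Lambda=\{4Km+(2K+2\mathbf{i}K')n\}_{m,n\in\mathbb{Z}}$ if $M>1$; $p_i=\sqrt{r_i-1}$, $q_i=\sqrt{s_i-1}$, each in $\mathbb{R}_{>0}\cup\mathbf{i}\mathbb{R}_{>0}$; $t_i$ is the complex number with $\operatorname{dn}(t_i,k)=\sqrt{f_i}$ if $M<1$, $=1/\sqrt{f_i}$ if $M>1$, on the open segment: if $\sigma_i<\pi$: $(0,\mathbf{i}K')$ when $p_iq_i>0$, $(K,K+\mathbf{i}K')$ when $p_iq_i\in\mathbf{i}\mathbb{R}_{>0}$, $(2K,2K+\mathbf{i}K')$ when $p_iq_i<0$; if $\sigma_i>\pi$: respectively $(2K,2K+\mathbf{i}K')$, $(3K,3K+\mathbf{i}K')$, $(0,\mathbf{i}K')$. *)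

theory Defs
  imports "HOL-Analysis.Analysis"
begin

type_synonym angfun = "nat \<Rightarrow> real"

text \<open>Angle data: four functions al, be, ga, de indexed by i = 1..4.\<close>

definition sig :: "angfun \<Rightarrow> angfun \<Rightarrow> angfun \<Rightarrow> angfun \<Rightarrow> nat \<Rightarrow> real" where
  "sig al be ga de i = (al i + be i + ga i + de i) / 2"

definition acoef :: "angfun \<Rightarrow> angfun \<Rightarrow> angfun \<Rightarrow> angfun \<Rightarrow> nat \<Rightarrow> real" where
  "acoef al be ga de i = sin (al i) / sin (sig al be ga de i - al i)"

definition bcoef :: "angfun \<Rightarrow> angfun \<Rightarrow> angfun \<Rightarrow> angfun \<Rightarrow> nat \<Rightarrow> real" where
  "bcoef al be ga de i = sin (be i) / sin (sig al be ga de i - be i)"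

definition ccoef :: "angfun \<Rightarrow> angfun \<Rightarrow> angfun \<Rightarrow> angfun \<Rightarrow> nat \<Rightarrow> real" where
  "ccoef al be ga de i = sin (ga i) / sin (sig al be ga de i - ga i)"

definition dcoef :: "angfun \<Rightarrow> angfun \<Rightarrow> angfun \<Rightarrow> angfun \<Rightarrow> nat \<Rightarrow> real" where
  "dcoef al be ga de i = sin (de i) / sin (sig al be ga de i - de i)"

definition coefs_defined :: "angfun \<Rightarrow> angfun \<Rightarrow> angfun \<Rightarrow> angfun \<Rightarrow> nat \<Rightarrow> bool" where
  "coefs_defined al be ga de i \<longleftrightarrow>
     sin (sig al be ga de i - al i) \<noteq> 0 \<and> sin (sig al be ga de i - be i) \<noteq> 0 \<and>
     sin (sig al be ga de i - ga i) \<noteq> 0 \<and> sin (sig al be ga de i - de i) \<noteq> 0"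

definition Mval :: "angfun \<Rightarrow> angfun \<Rightarrow> angfun \<Rightarrow> angfun \<Rightarrow> nat \<Rightarrow> real" where
  "Mval al be ga de i = acoef al be ga de i * bcoef al be ga de i * ccoef al be ga de i * dcoef al be ga de i"

definition rval :: "angfun \<Rightarrow> angfun \<Rightarrow> angfun \<Rightarrow> angfun \<Rightarrow> nat \<Rightarrow> real" where
  "rval al be ga de i = acoef al be ga de i * dcoef al be ga de i"

definition sval :: "angfun \<Rightarrow> angfun \<Rightarrow> angfun \<Rightarrow> angfun \<Rightarrow> nat \<Rightarrow> real" where
  "sval al be ga de i = ccoef al be ga de i * dcoef al be ga de i"

definition fval :: "angfun \<Rightarrow> angfun \<Rightarrow> angfun \<Rightarrow> angfun \<Rightarrow> nat \<Rightarrow> real" where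
  "fval al be ga de i = acoef al be ga de i * ccoef al be ga de i"

definition condE :: "angfun \<Rightarrow> angfun \<Rightarrow> angfun \<Rightarrow> angfun \<Rightarrow> bool" where
  "condE al be ga de \<longleftrightarrow>
     (\<forall>i\<in>{1..4}. \<forall>e1\<in>{-1,1::real}. \<forall>e2\<in>{-1,1::real}. \<forall>e3\<in>{-1,1::real}. \<forall>m::int.
        al i + e1 * be i + e2 * ga i + e3 * de i \<noteq> 2 * pi * of_int m)"

definition condC1 :: "angfun \<Rightarrow> angfun \<Rightarrow> angfun \<Rightarrow> angfun \<Rightarrow> bool" where
  "condC1 al be ga de \<longleftrightarrow>
     Mval al be ga de 1 = Mval al be ga de 2 \<and> Mval al be ga de 2 = Mval al be ga de 3 \<and>
     Mval al be ga de 3 = Mval al be ga de 4"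

definition condC2 :: "angfun \<Rightarrow> angfun \<Rightarrow> angfun \<Rightarrow> angfun \<Rightarrow> bool" where
  "condC2 al be ga de \<longleftrightarrow>
     rval al be ga de 1 = rval al be ga de 2 \<and> sval al be ga de 1 = sval al be ga de 4 \<and>
     rval al be ga de 3 = rval al be ga de 4 \<and> sval al be ga de 2 = sval al be ga de 3"

text \<open>Complete elliptic integral of the first kind (improper integral, Henstock-Kurzweil).\<close>
definition ellK :: "real \<Rightarrow> real" where
  "ellK k = integral {0..1} (\<lambda>x. 1 / sqrt ((1 - x\<^sup>2) * (1 - k\<^sup>2 * x\<^sup>2)))"

definition modk :: "real \<Rightarrow> real" where
  "modk M = (if M < 1 then sqrt (1 - M) else sqrt (1 - 1 / M))"

definition compmod :: "real \<Rightarrow> real" where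
  "compmod k = sqrt (1 - k\<^sup>2)"

text \<open>Jacobi theta functions theta_3, theta_4 with nome q (DLMF 20.2.3, 20.2.4).\<close>
definition theta3 :: "real \<Rightarrow> complex \<Rightarrow> complex" where
  "theta3 q z = 1 + 2 * (\<Sum>n. complex_of_real (q ^ ((n + 1)\<^sup>2)) * cos (2 * of_nat (n + 1) * z))"

definition theta4 :: "real \<Rightarrow> complex \<Rightarrow> complex" where
  "theta4 q z = 1 + 2 * (\<Sum>n. complex_of_real ((-1) ^ (n + 1) * q ^ ((n + 1)\<^sup>2)) * cos (2 * of_nat (n + 1) * z))"

text \<open>Jacobi elliptic function dn(u,k) for complex u (DLMF 22.2.6):
  dn(u,k) = theta4(0,q)/theta3(0,q) * theta3(zeta,q)/theta4(zeta,q),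
  zeta = pi u / (2K), q = exp(-pi K'/K).\<close>
definition jdn :: "complex \<Rightarrow> real \<Rightarrow> complex" where
  "jdn u k = (let K = ellK k; K' = ellK (compmod k); q = exp (- pi * K' / K);
               z = complex_of_real pi * u / complex_of_real (2 * K)
           in theta4 q 0 / theta3 q 0 * (theta3 q z / theta4 q z))"

definition latt :: "real \<Rightarrow> complex set" where
  "latt M = (let k = modk M; K = ellK k; K' = ellK (compmod k) in
     if M < 1 then {complex_of_real (4 * K * of_int m) + \<i> * complex_of_real (2 * K' * of_int n) | m n. True}
     else {complex_of_real (4 * K * of_int m) + complex_of_real (of_int n) * (complex_of_real (2 * K) + \<i> * complex_of_real (2 * K')) | m n. True})"

text \<open>p_i = sqrt(r_i - 1), q_i = sqrt(s_i - 1) in R_{>0} or i R_{>0}: principal square root.\<close>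
definition pval :: "angfun \<Rightarrow> angfun \<Rightarrow> angfun \<Rightarrow> angfun \<Rightarrow> nat \<Rightarrow> complex" where
  "pval al be ga de i = csqrt (complex_of_real (rval al be ga de i - 1))"

definition qval :: "angfun \<Rightarrow> angfun \<Rightarrow> angfun \<Rightarrow> angfun \<Rightarrow> nat \<Rightarrow> complex" where
  "qval al be ga de i = csqrt (complex_of_real (sval al be ga de i - 1))"

definition tprop :: "angfun \<Rightarrow> angfun \<Rightarrow> angfun \<Rightarrow> angfun \<Rightarrow> nat \<Rightarrow> complex \<Rightarrow> bool" where
  "tprop al be ga de i t \<longleftrightarrow>
    (let M = Mval al be ga de i; k = modk M; K = ellK k; K' = ellK (compmod k);
         f = fval al be ga de i;
         target = (if M < 1 then csqrt (complex_of_real f) else 1 / csqrt (complex_of_real f));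
         pq = pval al be ga de i * qval al be ga de i;
         A = (if sig al be ga de i < pi then
                (if pq \<in> \<real> \<and> 0 < Re pq then 0
                 else if Re pq = 0 \<and> 0 < Im pq then K else 2 * K)
              else
                (if pq \<in> \<real> \<and> 0 < Re pq then 2 * K
                 else if Re pq = 0 \<and> 0 < Im pq then 3 * K else 0))
     in jdn t k = target \<and>
        t \<in> open_segment (complex_of_real A) (complex_of_real A + \<i> * complex_of_real K'))"

definition tval :: "angfun \<Rightarrow> angfun \<Rightarrow> angfun \<Rightarrow> angfun \<Rightarrow> nat \<Rightarrow> complex" where
  "tval al be ga de i = (THE t. tprop al be ga de i t)"

text \<open>Condition (C3), including that all the quantities involved are defined.\<close>
definition condC3 :: "angfun \<Rightarrow> angfun \<Rightarrow> angfun \<Rightarrow> angfun \<Rightarrow> bool" where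
  "condC3 al be ga de \<longleftrightarrow>
     condC1 al be ga de \<and> Mval al be ga de 1 \<noteq> 1 \<and>
     (\<forall>i\<in>{1..4}. coefs_defined al be ga de i \<and> sig al be ga de i \<noteq> pi \<and>
        rval al be ga de i \<noteq> 1 \<and> sval al be ga de i \<noteq> 1 \<and> (\<exists>!t. tprop al be ga de i t)) \<and>
     (\<exists>e1\<in>{-1,1::complex}. \<exists>e2\<in>{-1,1::complex}. \<exists>e3\<in>{-1,1::complex}.
        tval al be ga de 1 + e1 * tval al be ga de 2 + e2 * tval al be ga de 3 + e3 * tval al be ga de 4
          \<in> latt (Mval al be ga de 1))"

end

theory Submission imports Defs begin
lemma ccos_shift: "cos (w + complex_of_real (2 * pi * real (n::nat))) = cos (w::complex)"
     "cos (w - complex_of_real (2 * pi * real (n::nat))) = cos (w::complex)"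
proof -
  have c: "cos (complex_of_real (2 * pi * real n)) = 1"
    by (simp only: cos_of_real) (metis cos_int_2pin of_int_of_nat_eq of_real_1)
  have s: "sin (complex_of_real (2 * pi * real n)) = 0"
    by (simp only: sin_of_real) (metis sin_int_2pin of_int_of_nat_eq of_real_0)
  show "cos (w + complex_of_real (2 * pi * real (n::nat))) = cos (w::complex)"
    "cos (w - complex_of_real (2 * pi * real (n::nat))) = cos (w::complex)"
    by (simp_all only: cos_add cos_diff c s) simp_all
qed
lemma cos_arg: "cos (2 * of_nat (n + 1) * (z + complex_of_real pi)) = cos (2 * of_nat (n + 1) * z)"
      "cos (2 * of_nat (n + 1) * (z - complex_of_real pi)) = cos (2 * of_nat (n + 1) * z)"
proof -
  have "2 * of_nat (n + 1) * (z + complex_of_real pi) = 2 * of_nat (n + 1) * z + complex_of_real (2 * pi * real (n+1))"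
       "2 * of_nat (n + 1) * (z - complex_of_real pi) = 2 * of_nat (n + 1) * z - complex_of_real (2 * pi * real (n+1))"
    by (simp_all add: algebra_simps)
  then show "cos (2 * of_nat (n + 1) * (z + complex_of_real pi)) = cos (2 * of_nat (n + 1) * z)"
      "cos (2 * of_nat (n + 1) * (z - complex_of_real pi)) = cos (2 * of_nat (n + 1) * z)"
    by (simp_all only: ccos_shift)
qed

lemma theta_shift: "theta3 q (z + complex_of_real pi) = theta3 q z" "theta3 q (z - complex_of_real pi) = theta3 q z"
  "theta4 q (z + complex_of_real pi) = theta4 q z" "theta4 q (z - complex_of_real pi) = theta4 q z"
  unfolding theta3_def theta4_def cos_arg by simp_all

lemma jdn_shift: "jdn (u + complex_of_real (2 * ellK k)) k = jdn u k"
   "jdn (u - complex_of_real (2 * ellK k)) k = jdn u k"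
proof -
  let ?K = "ellK k"
  have "complex_of_real pi * (u + complex_of_real (2 * ?K)) / complex_of_real (2 * ?K)
        = complex_of_real pi * u / complex_of_real (2 * ?K) + (if ?K = 0 then 0 else complex_of_real pi)"
       "complex_of_real pi * (u - complex_of_real (2 * ?K)) / complex_of_real (2 * ?K)
        = complex_of_real pi * u / complex_of_real (2 * ?K) - (if ?K = 0 then 0 else complex_of_real pi)"
    by (auto simp: field_simps)
  then show "jdn (u + complex_of_real (2 * ellK k)) k = jdn u k"
   "jdn (u - complex_of_real (2 * ellK k)) k = jdn u k"
    unfolding jdn_def Let_def by (auto simp: theta_shift)
qed
lemma sig_flip: "sig (\<lambda>i. pi - al i) (\<lambda>i. pi - be i) (\<lambda>i. pi - ga i) (\<lambda>i. pi - de i) i = 2*pi - sig al be ga de i"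
  unfolding sig_def by (simp add: field_simps)

lemma coef_flip:
  fixes al be ga de :: angfun
  defines "al' \<equiv> (\<lambda>i. pi - al i)" and "be' \<equiv> (\<lambda>i. pi - be i)"
      and "ga' \<equiv> (\<lambda>i. pi - ga i)" and "de' \<equiv> (\<lambda>i. pi - de i)"
  shows "acoef al' be' ga' de' = acoef al be ga de" "bcoef al' be' ga' de' = bcoef al be ga de"
        "ccoef al' be' ga' de' = ccoef al be ga de" "dcoef al' be' ga' de' = dcoef al be ga de"
        "coefs_defined al' be' ga' de' = coefs_defined al be ga de"
proof -
  have S: "sig al' be' ga' de' i = 2*pi - sig al be ga de i" for i
    unfolding assms by (rule sig_flip)
  have X: "sin (sig al' be' ga' de' i - (pi - x)) = sin (sig al be ga de i - x)" for i x
  proof -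
    have "sig al' be' ga' de' i - (pi - x) = pi - (sig al be ga de i - x)" unfolding S by simp
    then show ?thesis by (simp only: sin_pi_minus)
  qed
  have A: "al' i = pi - al i" "be' i = pi - be i" "ga' i = pi - ga i" "de' i = pi - de i" for i
    unfolding assms by simp_all
  show "acoef al' be' ga' de' = acoef al be ga de" "bcoef al' be' ga' de' = bcoef al be ga de"
        "ccoef al' be' ga' de' = ccoef al be ga de" "dcoef al' be' ga' de' = dcoef al be ga de"
        "coefs_defined al' be' ga' de' = coefs_defined al be ga de"
    by (auto simp: fun_eq_iff acoef_def bcoef_def ccoef_def dcoef_def coefs_defined_def A X)
qed
definition Aval :: "real \<Rightarrow> complex \<Rightarrow> real \<Rightarrow> real" where
  "Aval sg pq K = (if sg < pi then
                (if pq \<in> \<real> \<and> 0 < Re pq then 0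
                 else if Re pq = 0 \<and> 0 < Im pq then K else 2 * K)
              else
                (if pq \<in> \<real> \<and> 0 < Re pq then 2 * K
                 else if Re pq = 0 \<and> 0 < Im pq then 3 * K else 0))"

lemma tprop_alt: "tprop al be ga de i t \<longleftrightarrow>
   (jdn t (modk (Mval al be ga de i)) = (if Mval al be ga de i < 1 then csqrt (complex_of_real (fval al be ga de i))
          else 1 / csqrt (complex_of_real (fval al be ga de i))) \<and>
    t \<in> open_segment (complex_of_real (Aval (sig al be ga de i) (pval al be ga de i * qval al be ga de i) (ellK (modk (Mval al be ga de i)))))
      (complex_of_real (Aval (sig al be ga de i) (pval al be ga de i * qval al be ga de i) (ellK (modk (Mval al be ga de i))))
        + \<i> * complex_of_real (ellK (compmod (modk (Mval al be ga de i))))))"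
  unfolding tprop_def Aval_def Let_def by simp

lemma Aval_shift: "sg \<noteq> pi \<Longrightarrow> \<exists>s\<in>{-1,1::real}. Aval (2*pi - sg) pq K = Aval sg pq K + 2 * K * s"
  unfolding Aval_def by auto

lemma ex1_shift:
  assumes "\<And>t. P' t \<longleftrightarrow> P (t - c)"
  shows "(\<exists>!t. P' t) \<longleftrightarrow> (\<exists>!t::complex. P t)"
proof
  assume "\<exists>!t. P' t"
  then obtain t where t: "P' t" "\<And>y. P' y \<Longrightarrow> y = t" by blast
  show "\<exists>!t. P t"
  proof (rule ex1I[of _ "t - c"])
    show "P (t - c)" using t assms by blast
    fix y assume "P y" then have "P' (y + c)" using assms by simp
    then show "y = t - c" using t by fastforce
  qed
next
  assume "\<exists>!t. P t"
  then obtain t where t: "P t" "\<And>y. P y \<Longrightarrow> y = t" by blast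
  show "\<exists>!t. P' t"
  proof (rule ex1I[of _ "t + c"])
    have "P (t + c - c)" using t(1) by simp
    then show "P' (t + c)" using assms[of "t + c"] by blast
    fix y assume "P' y" then have "P (y - c)" using assms by blast
    then show "y = t + c" using t by fastforce
  qed
qed

lemma the_shift:
  assumes "\<And>t. P' t \<longleftrightarrow> P (t - c)" and "\<exists>!t::complex. P t"
  shows "(THE t. P' t) = (THE t. P t) + c"
proof (rule the_equality)
  have "P ((THE t. P t) + c - c)" using theI'[OF assms(2)] by simp
  then show "P' ((THE t. P t) + c)" using assms(1)[of "(THE t. P t) + c"] by blast
  fix y assume "P' y" then have "P (y - c)" using assms by blast
  then have "y - c = (THE t. P t)" using the1_equality[OF assms(2)] by simp
  then show "y = (THE t. P t) + c" by (metis diff_add_cancel)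
qed

lemma latt_shift: "x \<in> latt M \<Longrightarrow> x + complex_of_real (4 * ellK (modk M) * of_int m) \<in> latt M"
  unfolding latt_def Let_def
  apply (cases "M < 1")
   apply simp_all
   apply (elim exE)
   apply (rule_tac x="ma + m" in exI, rule_tac x=n in exI, simp add: algebra_simps)
  apply (elim exE)
  apply (rule_tac x="ma + m" in exI, rule_tac x=n in exI, simp add: algebra_simps)
  done

lemma pm1_int: "x \<in> {-1,1::real} \<Longrightarrow> \<exists>n::int. x = 2 * of_int n - 1"
  by (auto intro: exI[of _ 0] exI[of _ 1])

lemma pm1_sum: "a \<in> {-1,1::real} \<Longrightarrow> b \<in> {-1,1::real} \<Longrightarrow> c \<in> {-1,1::real} \<Longrightarrow> d \<in> {-1,1::real}
   \<Longrightarrow> \<exists>m::int. a + b + c + d = 2 * of_int m"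
proof -
  assume "a \<in> {-1,1::real}" "b \<in> {-1,1::real}" "c \<in> {-1,1::real}" "d \<in> {-1,1::real}"
  then obtain n1 n2 n3 n4 :: int where "a = 2 * of_int n1 - 1" "b = 2 * of_int n2 - 1"
     "c = 2 * of_int n3 - 1" "d = 2 * of_int n4 - 1" using pm1_int by metis
  then show ?thesis by (intro exI[of _ "n1 + n2 + n3 + n4 - 2"]) simp
qed

lemma cpm1: "e \<in> {-1,1::complex} \<Longrightarrow> \<exists>r\<in>{-1,1::real}. e = complex_of_real r"
  by auto

lemma pm1_mult: "a \<in> {-1,1::real} \<Longrightarrow> b \<in> {-1,1::real} \<Longrightarrow> a * b \<in> {-1,1::real}"
  by auto

lemma combo:
  assumes "s1 \<in> {-1,1::real}" "s2 \<in> {-1,1::real}" "s3 \<in> {-1,1::real}" "s4 \<in> {-1,1::real}"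
    "e1 \<in> {-1,1::complex}" "e2 \<in> {-1,1::complex}" "e3 \<in> {-1,1::complex}"
  shows "\<exists>m::int. complex_of_real (2*K * s1) + e1 * complex_of_real (2*K * s2) + e2 * complex_of_real (2*K * s3)
     + e3 * complex_of_real (2*K * s4) = complex_of_real (4 * K * of_int m)"
proof -
  obtain r1 r2 r3 where r: "r1 \<in> {-1,1::real}" "r2 \<in> {-1,1::real}" "r3 \<in> {-1,1::real}"
    "e1 = complex_of_real r1" "e2 = complex_of_real r2" "e3 = complex_of_real r3"
    using cpm1 assms(5-7) by metis
  obtain m :: int where m: "s1 + r1 * s2 + r2 * s3 + r3 * s4 = 2 * of_int m"
    using pm1_sum[OF assms(1) pm1_mult[OF r(1) assms(2)] pm1_mult[OF r(2) assms(3)] pm1_mult[OF r(3) assms(4)]] by blast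
  have "complex_of_real (2*K * s1) + e1 * complex_of_real (2*K * s2) + e2 * complex_of_real (2*K * s3)
     + e3 * complex_of_real (2*K * s4) = complex_of_real (2 * K * (s1 + r1 * s2 + r2 * s3 + r3 * s4))"
    unfolding r by (simp add: distrib_left)
  also have "\<dots> = complex_of_real (4 * K * of_int m)" using m by simp
  finally show ?thesis by blast
qed


lemma sum_shift: "(a1 + c1) + e1*(a2+c2) + e2*(a3+c3) + e3*(a4+(c4::complex)) = (a1 + e1*a2 + e2*a3 + e3*a4) + (c1 + e1*c2 + e2*c3 + e3*c4)"
  by (simp add: algebra_simps)

lemma condE_aux:
  assumes "e1 \<in> {-1,1::real}" "e2 \<in> {-1,1::real}" "e3 \<in> {-1,1::real}"
  shows "(\<forall>m::int. (pi - a) + e1*(pi-b) + e2*(pi-c) + e3*(pi-d) \<noteq> 2 * pi * of_int m)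
     \<longleftrightarrow> (\<forall>m::int. a + e1*b + e2*c + e3*d \<noteq> 2 * pi * of_int m)"
proof -
  let ?X = "a + e1*b + e2*c + e3*d"
  let ?Y = "(pi - a) + e1*(pi-b) + e2*(pi-c) + e3*(pi-d)"
  obtain j :: int where j: "1 + e1 + e2 + e3 = 2 * of_int j"
    using pm1_sum[of 1 e1 e2 e3] assms by auto
  have "?Y = pi * (1 + e1 + e2 + e3) - ?X" by (simp add: algebra_simps)
  also have "\<dots> = 2 * pi * of_int j - ?X" using j by simp
  finally have eq: "?Y = 2 * pi * of_int j - ?X" .
  have k: "?Y = 2 * pi * of_int m \<longleftrightarrow> ?X = 2 * pi * of_int (j - m)" for m
    using eq by (auto simp: right_diff_distrib)
  show ?thesis
  proof
    assume A: "\<forall>m::int. ?Y \<noteq> 2 * pi * of_int m"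
    show "\<forall>m::int. ?X \<noteq> 2 * pi * of_int m"
    proof
      fix m :: int
      have "?X \<noteq> 2 * pi * of_int (j - (j - m))" using A k by blast
      then show "?X \<noteq> 2 * pi * of_int m" by simp
    qed
  next
    assume A: "\<forall>m::int. ?X \<noteq> 2 * pi * of_int m"
    then show "\<forall>m::int. ?Y \<noteq> 2 * pi * of_int m" using k by blast
  qed
qed

theorem lemma3:
  fixes al be ga de :: "nat \<Rightarrow> real"
  assumes "\<forall>i\<in>{1..4}. al i \<in> {0<..<pi} \<and> be i \<in> {0<..<pi} \<and> ga i \<in> {0<..<pi} \<and> de i \<in> {0<..<pi}"
  defines "al' \<equiv> (\<lambda>i. pi - al i)" and "be' \<equiv> (\<lambda>i. pi - be i)"
      and "ga' \<equiv> (\<lambda>i. pi - ga i)" and "de' \<equiv> (\<lambda>i. pi - de i)"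
  shows "(\<forall>i\<in>{1..4}. Mval al' be' ga' de' i = Mval al be ga de i \<and>
                      rval al' be' ga' de' i = rval al be ga de i \<and>
                      sval al' be' ga' de' i = sval al be ga de i \<and>
                      fval al' be' ga' de' i = fval al be ga de i)
       \<and> (condE al' be' ga' de' \<longleftrightarrow> condE al be ga de)
       \<and> (condC1 al' be' ga' de' \<longleftrightarrow> condC1 al be ga de)
       \<and> (condC2 al' be' ga' de' \<longleftrightarrow> condC2 al be ga de)
       \<and> (condC3 al' be' ga' de' \<longleftrightarrow> condC3 al be ga de)"
proof -
  have Cf: "acoef al' be' ga' de' = acoef al be ga de" "bcoef al' be' ga' de' = bcoef al be ga de"
        "ccoef al' be' ga' de' = ccoef al be ga de" "dcoef al' be' ga' de' = dcoef al be ga de"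
        "coefs_defined al' be' ga' de' = coefs_defined al be ga de"
    using coef_flip[of al be ga de] unfolding al'_def be'_def ga'_def de'_def by simp_all
  have S: "\<And>i. sig al' be' ga' de' i = 2 * pi - sig al be ga de i"
    unfolding al'_def be'_def ga'_def de'_def by (rule sig_flip)
  have MF: "Mval al' be' ga' de' = Mval al be ga de" "rval al' be' ga' de' = rval al be ga de"
     "sval al' be' ga' de' = sval al be ga de" "fval al' be' ga' de' = fval al be ga de"
     "pval al' be' ga' de' = pval al be ga de" "qval al' be' ga' de' = qval al be ga de"
    by (simp_all add: fun_eq_iff Mval_def rval_def sval_def fval_def pval_def qval_def Cf)
  have part1: "\<forall>i\<in>{1..4}. Mval al' be' ga' de' i = Mval al be ga de i \<and>
                      rval al' be' ga' de' i = rval al be ga de i \<and>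
                      sval al' be' ga' de' i = sval al be ga de i \<and>
                      fval al' be' ga' de' i = fval al be ga de i"
    by (simp add: MF)
  have E: "condE al' be' ga' de' \<longleftrightarrow> condE al be ga de"
    unfolding condE_def al'_def be'_def ga'_def de'_def
    by (intro ball_cong refl condE_aux) simp_all
  have C1: "condC1 al' be' ga' de' \<longleftrightarrow> condC1 al be ga de"
    unfolding condC1_def MF ..
  have C2: "condC2 al' be' ga' de' \<longleftrightarrow> condC2 al be ga de"
    unfolding condC2_def MF ..
  have P: "\<exists>s\<in>{-1,1::real}. \<forall>t. tprop al' be' ga' de' i t \<longleftrightarrow>
             tprop al be ga de i (t - complex_of_real (2 * ellK (modk (Mval al be ga de i)) * s))"
    if ne: "sig al be ga de i \<noteq> pi" for i
  proof -
    define K where "K = ellK (modk (Mval al be ga de i))"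
    define A0 where "A0 = Aval (sig al be ga de i) (pval al be ga de i * qval al be ga de i) K"
    obtain s where s: "s \<in> {-1,1::real}" and
      A: "Aval (2 * pi - sig al be ga de i) (pval al be ga de i * qval al be ga de i) K = A0 + 2 * K * s"
      using Aval_shift[OF ne] unfolding A0_def by blast
    define c where "c = complex_of_real (2 * K * s)"
    have J: "jdn (t - c) (modk (Mval al be ga de i)) = jdn t (modk (Mval al be ga de i))" for t
    proof (cases "s = 1")
      case True
      then have "t - c = t - complex_of_real (2 * K)" unfolding c_def by simp
      then show ?thesis unfolding K_def by (simp only: jdn_shift)
    next
      case False
      then have "s = -1" using s by auto
      then have "t - c = t + complex_of_real (2 * K)" unfolding c_def by simp
      then show ?thesis unfolding K_def by (simp only: jdn_shift)
    qed
    have O: "t \<in> open_segment (complex_of_real (A0 + 2 * K * s)) (complex_of_real (A0 + 2 * K * s) + z)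
       \<longleftrightarrow> t - c \<in> open_segment (complex_of_real A0) (complex_of_real A0 + z)" for t z
    proof -
      have e: "c + (t - c) = t" "c + complex_of_real A0 = complex_of_real (A0 + 2 * K * s)"
           "c + (complex_of_real A0 + z) = complex_of_real (A0 + 2 * K * s) + z"
        unfolding c_def by (simp_all add: algebra_simps)
      then show ?thesis
        using open_segment_translation_eq[of c "t - c" "complex_of_real A0" "complex_of_real A0 + z"]
        by (simp only: e)
    qed
    have "tprop al' be' ga' de' i t \<longleftrightarrow> tprop al be ga de i (t - c)" for t
      unfolding tprop_alt MF S
      unfolding K_def[symmetric] A A0_def[symmetric] J O ..
    then show ?thesis using s unfolding c_def K_def by blast
  qed
  have H: "(coefs_defined al' be' ga' de' i \<and> sig al' be' ga' de' i \<noteq> pi \<and> rval al' be' ga' de' i \<noteq> 1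
             \<and> sval al' be' ga' de' i \<noteq> 1 \<and> (\<exists>!t. tprop al' be' ga' de' i t))
       \<longleftrightarrow> (coefs_defined al be ga de i \<and> sig al be ga de i \<noteq> pi \<and> rval al be ga de i \<noteq> 1
             \<and> sval al be ga de i \<noteq> 1 \<and> (\<exists>!t. tprop al be ga de i t))" for i
  proof (cases "sig al be ga de i = pi")
    case True
    then show ?thesis by (simp add: S)
  next
    case False
    then obtain s where "\<forall>t. tprop al' be' ga' de' i t \<longleftrightarrow>
             tprop al be ga de i (t - complex_of_real (2 * ellK (modk (Mval al be ga de i)) * s))"
      using P by blast
    then have "(\<exists>!t. tprop al' be' ga' de' i t) \<longleftrightarrow> (\<exists>!t. tprop al be ga de i t)"
      by (intro ex1_shift) blast
    then show ?thesis using False by (simp add: S Cf MF)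
  qed
  have L: "(\<exists>e1\<in>{-1,1::complex}. \<exists>e2\<in>{-1,1::complex}. \<exists>e3\<in>{-1,1::complex}.
        tval al' be' ga' de' 1 + e1 * tval al' be' ga' de' 2 + e2 * tval al' be' ga' de' 3 + e3 * tval al' be' ga' de' 4
          \<in> latt (Mval al be ga de 1))
     \<longleftrightarrow> (\<exists>e1\<in>{-1,1::complex}. \<exists>e2\<in>{-1,1::complex}. \<exists>e3\<in>{-1,1::complex}.
        tval al be ga de 1 + e1 * tval al be ga de 2 + e2 * tval al be ga de 3 + e3 * tval al be ga de 4
          \<in> latt (Mval al be ga de 1))"
    if G: "condC1 al be ga de"
       "\<forall>i\<in>{1..4}. coefs_defined al be ga de i \<and> sig al be ga de i \<noteq> pi \<and> rval al be ga de i \<noteq> 1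
             \<and> sval al be ga de i \<noteq> 1 \<and> (\<exists>!t. tprop al be ga de i t)"
  proof -
    define K where "K = ellK (modk (Mval al be ga de 1))"
    have T: "\<exists>s\<in>{-1,1::real}. tval al' be' ga' de' i = tval al be ga de i + complex_of_real (2 * K * s)"
      if i: "i \<in> {1..4}" for i
    proof -
      have "i = 1 \<or> i = 2 \<or> i = 3 \<or> i = 4" using i by auto
      then have Mi: "Mval al be ga de i = Mval al be ga de 1"
        using G(1) unfolding condC1_def by auto
      from G(2) i have ne: "sig al be ga de i \<noteq> pi" and u: "\<exists>!t. tprop al be ga de i t" by auto
      obtain s where s: "s \<in> {-1,1::real}" and st: "\<forall>t. tprop al' be' ga' de' i t \<longleftrightarrow>
             tprop al be ga de i (t - complex_of_real (2 * K * s))"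
        using P[OF ne] unfolding Mi K_def by blast
      have "tval al' be' ga' de' i = tval al be ga de i + complex_of_real (2 * K * s)"
        unfolding tval_def by (rule the_shift[OF _ u]) (use st in blast)
      then show ?thesis using s by blast
    qed
    have mem: "(1::nat) \<in> {1..4}" "(2::nat) \<in> {1..4}" "(3::nat) \<in> {1..4}" "(4::nat) \<in> {1..4}" by auto
    obtain s1 where s1: "s1 \<in> {-1,1::real}" "tval al' be' ga' de' 1 = tval al be ga de 1 + complex_of_real (2 * K * s1)"
      using T[OF mem(1)] by blast
    obtain s2 where s2: "s2 \<in> {-1,1::real}" "tval al' be' ga' de' 2 = tval al be ga de 2 + complex_of_real (2 * K * s2)"
      using T[OF mem(2)] by blast
    obtain s3 where s3: "s3 \<in> {-1,1::real}" "tval al' be' ga' de' 3 = tval al be ga de 3 + complex_of_real (2 * K * s3)"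
      using T[OF mem(3)] by blast
    obtain s4 where s4: "s4 \<in> {-1,1::real}" "tval al' be' ga' de' 4 = tval al be ga de 4 + complex_of_real (2 * K * s4)"
      using T[OF mem(4)] by blast
    have Q: "tval al' be' ga' de' 1 + e1 * tval al' be' ga' de' 2 + e2 * tval al' be' ga' de' 3 + e3 * tval al' be' ga' de' 4
          \<in> latt (Mval al be ga de 1) \<longleftrightarrow>
          tval al be ga de 1 + e1 * tval al be ga de 2 + e2 * tval al be ga de 3 + e3 * tval al be ga de 4
          \<in> latt (Mval al be ga de 1)"
      if e: "e1 \<in> {-1,1::complex}" "e2 \<in> {-1,1::complex}" "e3 \<in> {-1,1::complex}" for e1 e2 e3
    proof -
      obtain m :: int where m: "complex_of_real (2 * K * s1) + e1 * complex_of_real (2 * K * s2) + e2 * complex_of_real (2 * K * s3)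
     + e3 * complex_of_real (2 * K * s4) = complex_of_real (4 * K * of_int m)"
        using combo[OF s1(1) s2(1) s3(1) s4(1) e] by blast
      define x where "x = tval al be ga de 1 + e1 * tval al be ga de 2 + e2 * tval al be ga de 3 + e3 * tval al be ga de 4"
      have eq: "tval al' be' ga' de' 1 + e1 * tval al' be' ga' de' 2 + e2 * tval al' be' ga' de' 3 + e3 * tval al' be' ga' de' 4
          = x + complex_of_real (4 * K * of_int m)"
        unfolding s1(2) s2(2) s3(2) s4(2) sum_shift m x_def ..
      have "x + complex_of_real (4 * K * of_int m) \<in> latt (Mval al be ga de 1) \<longleftrightarrow> x \<in> latt (Mval al be ga de 1)"
      proof
        assume "x + complex_of_real (4 * K * of_int m) \<in> latt (Mval al be ga de 1)"
        from latt_shift[OF this, of "- m"] show "x \<in> latt (Mval al be ga de 1)"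
          unfolding K_def by (simp add: algebra_simps)
      next
        assume "x \<in> latt (Mval al be ga de 1)"
        from latt_shift[OF this, of m] show "x + complex_of_real (4 * K * of_int m) \<in> latt (Mval al be ga de 1)"
          unfolding K_def .
      qed
      then show ?thesis unfolding eq x_def .
    qed
    show ?thesis
      by (rule bex_cong[OF refl] | rule Q | assumption)+
  qed
  have C3: "condC3 al' be' ga' de' \<longleftrightarrow> condC3 al be ga de"
    unfolding condC3_def C1 H MF(1)
    using L by blast
  show ?thesis using part1 E C1 C2 C3 by blast
qed

end
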